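(* Let $c\in(0,1)$, $f_{\mathrm{cost}}(x)=x^c$, and $F_{\mathrm{cost}}(p)=\sum_i p(i)^c$. For every set $S$ of $m=2$ discrete probability distributions, the greedy coupling satisfies $$F_{\mathrm{cost}}(\mathcal G_S)\le\Big(1-c^{1/(1-c)}(1/c-1)\Big)^{-1}\min_C F_{\mathrm{cost}}(C),$$ where the minimum is over couplings $C$ of $S$.
   Context: A coupling of two distributions is a joint distribution with those marginals; its cost is $F_{\mathrm{cost}}$ applied to its vector of probabilities. Greedy coupling algorithm: maintain the remaining masses of the states of each distribution in $S$. Repeatedly: let $r=\min_{p\in S}\max_j p(j)$; if $r=0$ stop; otherwise append $r$ as the next state of $\mathcal G_S$ and subtract $r$ from the largest remaining state of every distribution (ties broken arbitrarily). $\mathcal G_S$ is the resulting list of state masses. *)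

theory Defs
  imports Complex_Main
begin

definition is_distr :: "('a::finite \<Rightarrow> real) \<Rightarrow> bool" where
  "is_distr p \<longleftrightarrow> (\<forall>x. 0 \<le> p x) \<and> (\<Sum>x\<in>UNIV. p x) = 1"

definition is_coupling :: "('a::finite \<Rightarrow> real) \<Rightarrow> ('b::finite \<Rightarrow> real) \<Rightarrow> ('a \<times> 'b \<Rightarrow> real) \<Rightarrow> bool" where
  "is_coupling p q C \<longleftrightarrow> (\<forall>z. 0 \<le> C z)
     \<and> (\<forall>x. (\<Sum>y\<in>UNIV. C (x, y)) = p x)
     \<and> (\<forall>y. (\<Sum>x\<in>UNIV. C (x, y)) = q y)"

definition F_cost :: "real \<Rightarrow> ('a::finite \<Rightarrow> real) \<Rightarrow> real" where
  "F_cost c C = (\<Sum>z\<in>UNIV. C z powr c)"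

definition F_cost_list :: "real \<Rightarrow> real list \<Rightarrow> real" where
  "F_cost_list c G = sum_list (map (\<lambda>r. r powr c) G)"

text \<open>Runs of the greedy coupling algorithm for two distributions (remaining masses p, q),
  producing the list of state masses; ties are broken arbitrarily, so every choice
  of a maximal state is a possible run.\<close>
inductive greedy_run :: "('a::finite \<Rightarrow> real) \<Rightarrow> ('b::finite \<Rightarrow> real) \<Rightarrow> real list \<Rightarrow> bool" where
  stop: "min (Max (range p)) (Max (range q)) = 0 \<Longrightarrow> greedy_run p q []"
| step: "r = min (Max (range p)) (Max (range q)) \<Longrightarrow> r \<noteq> 0 \<Longrightarrow>
         p i = Max (range p) \<Longrightarrow> q j = Max (range q) \<Longrightarrow>
         greedy_run (p(i := p i - r)) (q(j := q j - r)) rs \<Longrightarrow> greedy_run p q (r # rs)"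

end

theory Submission imports Defs "HOL-Analysis.Analysis" begin


lemma young_c:
  fixes c x :: real assumes "0 < c" "c < 1" "0 \<le> x"
  shows "x powr c \<le> c * x + (1 - c)"
proof (cases "x = 0")
  case True then show ?thesis using assms by simp
next
  case False
  then have "x powr c * 1 powr (1 - c) \<le> c * x + (1 - c) * 1"
    using assms by (intro Youngs_inequality_0) auto
  then show ?thesis by simp
qed

lemma delta_bound:
  fixes c a r :: real assumes c: "0 < c" "c < 1" and a: "0 \<le> a" and r: "0 < r"
  shows "a powr c - a * r powr (c - 1) \<le> c powr (1 / (1 - c)) * (1 / c - 1) * r powr c"
proof -
  define t where "t = c powr (1 / (1 - c))"
  have t0: "0 < t" using c by (simp add: t_def)
  define x where "x = a / (t * r)"
  have x0: "0 \<le> x" using a t0 r by (simp add: x_def)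
  have Y: "x powr c \<le> c * x + (1 - c)" using young_c[OF c x0] .
  have tr0: "0 < t * r" using t0 r by simp
  have "a = x * (t * r)" using t0 r by (simp add: x_def)
  then have "a powr c = x powr c * (t * r) powr c" using x0 tr0 by (simp add: powr_mult)
  also have "\<dots> \<le> (c * x + (1 - c)) * (t * r) powr c"
    using Y by (intro mult_right_mono) auto
  also have "\<dots> = c * x * (t * r) powr c + (1 - c) * (t * r) powr c" by (simp add: algebra_simps)
  also have "c * x * (t * r) powr c = a * r powr (c - 1)"
  proof -
    have "(t * r) powr c = (t * r) * (t * r) powr (c - 1)"
      using tr0 by (simp add: powr_mult_base)
    then have "c * x * (t * r) powr c = c * a * (t * r) powr (c - 1)"
      using tr0 by (simp add: x_def)
    also have "(t * r) powr (c - 1) = t powr (c - 1) * r powr (c - 1)"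
      using t0 r by (simp add: powr_mult)
    also have "t powr (c - 1) = 1 / c"
    proof -
      have "t powr (c - 1) = c powr (1 / (1 - c) * (c - 1))" using c by (simp add: t_def powr_powr)
      also have "1 / (1 - c) * (c - 1) = -1" using c by (simp add: field_simps)
      finally show ?thesis using c by (simp add: powr_minus divide_inverse)
    qed
    finally show ?thesis using c by simp
  qed
  also have "(1 - c) * (t * r) powr c = c powr (1 / (1 - c)) * (1 / c - 1) * r powr c"
  proof -
    have "(t * r) powr c = t powr c * r powr c" using t0 r by (simp add: powr_mult)
    moreover have "t powr c = t * (1 / c)"
    proof -
      have "t powr c = t * t powr (c - 1)" using t0 by (simp add: powr_mult_base)
      also have "t powr (c - 1) = c powr (1 / (1 - c) * (c - 1))" using c by (simp add: t_def powr_powr)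
      also have "1 / (1 - c) * (c - 1) = -1" using c by (simp add: field_simps)
      finally show ?thesis using c by (simp add: powr_minus divide_inverse)
    qed
    ultimately have "(1 - c) * (t * r) powr c = t * (1 / c - 1) * r powr c"
      using c by (simp add: field_simps)
    then show ?thesis by (simp add: t_def)
  qed
  finally show ?thesis by simp
qed

lemma ind_integral:
  fixes c \<theta> :: real assumes c: "0 < c" "c < 1" and th: "0 < \<theta>"
  shows "((\<lambda>t. (if \<theta> \<le> t then 1 else 0) * t powr (c - 2)) has_integral \<theta> powr (c - 1) / (1 - c)) {0<..}"
proof -
  have "((\<lambda>t. t powr (c - 2)) has_integral - (\<theta> powr (c - 2 + 1)) / (c - 2 + 1)) {\<theta>..}"
    using c th by (intro has_integral_powr_to_inf) auto
  moreover have "- (\<theta> powr (c - 2 + 1)) / (c - 2 + 1) = \<theta> powr (c - 1) / (1 - c)"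
    using c by (simp add: field_simps)
  ultimately have "((\<lambda>t. t powr (c - 2)) has_integral \<theta> powr (c - 1) / (1 - c)) {\<theta>..}" by simp
  then have "((\<lambda>t. if t \<in> {\<theta>..} then t powr (c - 2) else 0) has_integral \<theta> powr (c - 1) / (1 - c)) {0<..}"
    using th by (subst has_integral_restrict) auto
  then show ?thesis by (rule has_integral_eq[rotated]) auto
qed



definition gt :: "real \<Rightarrow> real \<Rightarrow> real" where
  "gt t v = (if 0 < v \<and> v \<le> t then v else 0)"

definition mass :: "('a::finite \<Rightarrow> real) \<Rightarrow> real \<Rightarrow> real" where
  "mass X t = (\<Sum>z\<in>UNIV. gt t (X z))"

definition lmass :: "real list \<Rightarrow> real \<Rightarrow> real" where
  "lmass G t = sum_list (map (\<lambda>r. if r \<le> t then r else 0) G)"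

definition errs :: "real list \<Rightarrow> real list \<Rightarrow> real \<Rightarrow> real" where
  "errs A G t = sum_list (map (\<lambda>(a, r). if a \<le> t \<and> t < r then a else 0) (zip A G))"

lemma gt_nonneg: "0 \<le> gt t v" by (simp add: gt_def)
lemma gt_le: "0 \<le> v \<Longrightarrow> gt t v \<le> v" by (simp add: gt_def)

lemma mass_nonneg: "0 \<le> mass X t"
  unfolding mass_def by (intro sum_nonneg) (simp add: gt_nonneg)

lemma sum_upd_gen:
  fixes f :: "'a::finite \<Rightarrow> 'c" and g :: "'c \<Rightarrow> real"
  shows "(\<Sum>z\<in>UNIV. g ((f(i := v)) z)) = (\<Sum>z\<in>UNIV. g (f z)) - g (f i) + g v"
proof -
  have A: "(\<Sum>z\<in>UNIV. g ((f(i := v)) z)) = g v + (\<Sum>z\<in>UNIV - {i}. g ((f(i := v)) z))"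
    by (subst sum.remove[of _ i]) auto
  have B: "(\<Sum>z\<in>UNIV. g (f z)) = g (f i) + (\<Sum>z\<in>UNIV - {i}. g (f z))"
    by (subst sum.remove[of _ i]) auto
  have C: "(\<Sum>z\<in>UNIV - {i}. g ((f(i := v)) z)) = (\<Sum>z\<in>UNIV - {i}. g (f z))"
    by (intro sum.cong) auto
  show ?thesis using A B C by linarith
qed

lemma mass_upd: "mass (X(i := v)) t = mass X t - gt t (X i) + gt t v"
  unfolding mass_def by (rule sum_upd_gen)

lemma sum_upd: "(\<Sum>z\<in>UNIV. ((X::'a::finite \<Rightarrow> real)(i := v)) z) = (\<Sum>z\<in>UNIV. X z) - X i + (v::real)"
  using sum_upd_gen[of "\<lambda>x. x" X i v] by simp

lemma mass_all:
  assumes "\<forall>z. 0 \<le> X z" "\<forall>z. X z \<le> t"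
  shows "mass X t = (\<Sum>z\<in>UNIV. X z)"
proof -
  have "gt t (X z) = X z" for z using assms(1)[rule_format, of z] assms(2)[rule_format, of z]
    unfolding gt_def by auto
  then show ?thesis unfolding mass_def by simp
qed

lemma mass_lt:
  assumes "\<forall>z. 0 \<le> X z" "t < X j"
  shows "mass X t \<le> (\<Sum>z\<in>UNIV. X z) - X j"
proof -
  have "mass X t = gt t (X j) + (\<Sum>z\<in>UNIV - {j}. gt t (X z))"
    unfolding mass_def by (subst sum.remove[of _ j]) auto
  also have "gt t (X j) = 0" using assms by (simp add: gt_def)
  also have "(\<Sum>z\<in>UNIV - {j}. gt t (X z)) \<le> (\<Sum>z\<in>UNIV - {j}. X z)"
    using assms by (intro sum_mono gt_le) auto
  also have "(\<Sum>z\<in>UNIV - {j}. X z) = (\<Sum>z\<in>UNIV. X z) - X j"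
    by (subst sum.remove[of UNIV j]) auto
  finally show ?thesis by simp
qed

lemma le_Max_range: "(f::'a::finite \<Rightarrow> real) x \<le> Max (range f)"
  by (intro Max_ge) auto

lemma stepA:
  fixes p :: "'a::finite \<Rightarrow> real" and q :: "'b::finite \<Rightarrow> real"
  assumes p0: "\<forall>x. 0 \<le> p x" and q0: "\<forall>y. 0 \<le> q y"
    and S: "(\<Sum>x\<in>UNIV. p x) = (\<Sum>y\<in>UNIV. q y)"
    and pi: "p i = Max (range p)" and qj: "q j = Max (range q)"
    and rle: "p i \<le> q j" and r: "r = p i"
  shows "(if r \<le> t then r else 0) + max (mass (p(i := p i - r)) t) (mass (q(j := q j - r)) t)
    \<le> max (mass p t) (mass q t)
       + (if (if q j - r < r then q j - r else 0) \<le> t \<and> t < r then (if q j - r < r then q j - r else 0) else 0)"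
proof -
  have pmax: "\<forall>x. p x \<le> p i" using pi le_Max_range by metis
  have qmax: "\<forall>y. q y \<le> q j" using qj le_Max_range by metis
  have r0: "0 \<le> r" using r p0 by simp
  have mp': "mass (p(i := p i - r)) t = mass p t - gt t (p i)"
    using mass_upd[of p i "p i - r" t] r by (simp add: gt_def)
  have mq': "mass (q(j := q j - r)) t = mass q t - gt t (q j) + gt t (q j - r)"
    using mass_upd[of q j "q j - r" t] by simp
  have g1: "0 \<le> gt t (q j - r)" "gt t (q j - r) \<le> q j - r"
    using rle r by (auto intro: gt_nonneg gt_le)
  have mpn: "0 \<le> mass p t" "0 \<le> mass q t" by (auto intro: mass_nonneg)
  show ?thesis
  proof (cases "r \<le> t")
    case True
    have mpS: "mass p t = (\<Sum>x\<in>UNIV. p x)"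
      using p0 pmax True r by (intro mass_all) (auto intro: order_trans)
    have gpi: "gt t (p i) = p i" using True r p0[rule_format, of i] by (auto simp: gt_def)
    show ?thesis
    proof (cases "q j \<le> t")
      case True
      have "gt t (q j) = q j" using True q0[rule_format, of j] by (auto simp: gt_def)
      then show ?thesis using mp' mq' g1 mpS gpi r \<open>r \<le> t\<close> mpn by (auto simp: max_def)
    next
      case False
      have "gt t (q j) = 0" using False by (auto simp: gt_def)
      moreover have "mass q t \<le> (\<Sum>y\<in>UNIV. q y) - q j" using q0 False by (intro mass_lt) auto
      ultimately show ?thesis using mp' mq' g1 mpS gpi r \<open>r \<le> t\<close> S mpn by (auto simp: max_def)
    qed
  next
    case False
    have "gt t (p i) = 0" using False r by (auto simp: gt_def)
    moreover have "gt t (q j) = 0" using False r rle by (auto simp: gt_def)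
    moreover define e where "e = (if (if q j - r < r then q j - r else 0) \<le> t \<and> t < r then (if q j - r < r then q j - r else 0) else 0)"
    moreover have "gt t (q j - r) \<le> e"
      using False rle r unfolding e_def by (auto simp: gt_def)
    moreover have "0 \<le> e" using rle r unfolding e_def by auto
    ultimately show ?thesis unfolding e_def[symmetric] using mp' mq' g1 False mpn
      by (auto simp: max_def)
  qed
qed

lemma stepE:
  fixes p :: "'a::finite \<Rightarrow> real" and q :: "'b::finite \<Rightarrow> real"
  assumes p0: "\<forall>x. 0 \<le> p x" and q0: "\<forall>y. 0 \<le> q y"
    and S: "(\<Sum>x\<in>UNIV. p x) = (\<Sum>y\<in>UNIV. q y)"
    and pi: "p i = Max (range p)" and qj: "q j = Max (range q)"
    and r: "r = min (Max (range p)) (Max (range q))"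
  shows "\<exists>\<alpha>. 0 \<le> \<alpha> \<and> \<alpha> \<le> r \<and> (\<forall>t. (if r \<le> t then r else 0)
     + max (mass (p(i := p i - r)) t) (mass (q(j := q j - r)) t)
    \<le> max (mass p t) (mass q t) + (if \<alpha> \<le> t \<and> t < r then \<alpha> else 0))"
proof (cases "p i \<le> q j")
  case True
  then have rr: "r = p i" using r unfolding pi[symmetric] qj[symmetric] by simp
  show ?thesis
    apply (rule exI[of _ "if q j - r < r then q j - r else 0"])
    using stepA[OF p0 q0 S pi qj True rr] True rr p0 by auto
next
  case False
  then have rr: "r = q j" using r unfolding pi[symmetric] qj[symmetric] by simp
  have T: "q j \<le> p i" using False by simp
  show ?thesis
    apply (rule exI[of _ "if p i - r < r then p i - r else 0"])
    using stepA[OF q0 p0 S[symmetric] qj pi T rr] T rr q0 by (auto simp: max.commute)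
qed

lemma main_ind:
  "greedy_run p q G \<Longrightarrow> \<forall>x. 0 \<le> p x \<Longrightarrow> \<forall>y. 0 \<le> q y \<Longrightarrow>
   (\<Sum>x\<in>UNIV. p x) = (\<Sum>y\<in>UNIV. q y) \<Longrightarrow>
   (\<forall>r\<in>set G. 0 < r) \<and> (\<exists>A. list_all2 (\<lambda>a r. 0 \<le> a \<and> a \<le> r) A G \<and>
      (\<forall>t. lmass G t \<le> max (mass p t) (mass q t) + errs A G t))"
proof (induction rule: greedy_run.induct)
  case (stop p q)
  then show ?case
    by (auto intro!: exI[of _ "[]"] simp: lmass_def errs_def intro: le_max_iff_disj[THEN iffD2] mass_nonneg)
next
  case (step r p q i j rs)
  have r0: "0 \<le> r" using step.hyps(1) step.prems le_Max_range
    by (metis min_def order_trans)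
  then have rpos: "0 < r" using step.hyps(2) by simp
  have rp: "r \<le> p i" "r \<le> q j" using step.hyps by auto
  have p0': "\<forall>x. 0 \<le> (p(i := p i - r)) x" using step.prems rp by auto
  have q0': "\<forall>y. 0 \<le> (q(j := q j - r)) y" using step.prems rp by auto
  have S': "(\<Sum>x\<in>UNIV. (p(i := p i - r)) x) = (\<Sum>y\<in>UNIV. (q(j := q j - r)) y)"
    using step.prems(3) sum_upd[of p i "p i - r"] sum_upd[of q j "q j - r"] by simp
  from step.IH[OF p0' q0' S'] obtain A where
    pos: "\<forall>r\<in>set rs. 0 < r" and A: "list_all2 (\<lambda>a r. 0 \<le> a \<and> a \<le> r) A rs"
    and IH: "\<forall>t. lmass rs t \<le> max (mass (p(i := p i - r)) t) (mass (q(j := q j - r)) t) + errs A rs t"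
    by blast
  obtain \<alpha> where al: "0 \<le> \<alpha>" "\<alpha> \<le> r" and E: "\<forall>t. (if r \<le> t then r else 0)
     + max (mass (p(i := p i - r)) t) (mass (q(j := q j - r)) t)
    \<le> max (mass p t) (mass q t) + (if \<alpha> \<le> t \<and> t < r then \<alpha> else 0)"
    using stepE[OF step.prems step.hyps(3) step.hyps(4) step.hyps(1)] by blast
  have "\<forall>t. lmass (r # rs) t \<le> max (mass p t) (mass q t) + errs (\<alpha> # A) (r # rs) t"
  proof
    fix t
    have "lmass (r # rs) t = (if r \<le> t then r else 0) + lmass rs t" by (simp add: lmass_def)
    moreover have "errs (\<alpha> # A) (r # rs) t = (if \<alpha> \<le> t \<and> t < r then \<alpha> else 0) + errs A rs t"
      by (simp add: errs_def)
    ultimately show "lmass (r # rs) t \<le> max (mass p t) (mass q t) + errs (\<alpha> # A) (r # rs) t"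
      using IH[rule_format, of t] E[rule_format, of t] by linarith
  qed
  then show ?case using pos rpos A al by (auto intro!: exI[of _ "\<alpha> # A"])
qed



lemma cell_int:
  fixes c v :: real assumes c: "0 < c" "c < 1" and v: "0 \<le> v"
  shows "((\<lambda>t. gt t v * t powr (c - 2)) has_integral v powr c / (1 - c)) {0<..}"
proof (cases "v = 0")
  case True then show ?thesis by (simp add: gt_def)
next
  case False
  then have vp: "0 < v" using v by simp
  have "((\<lambda>t. v * ((if v \<le> t then 1 else 0) * t powr (c - 2))) has_integral v * (v powr (c - 1) / (1 - c))) {0<..}"
    by (intro has_integral_mult_right ind_integral c vp)
  moreover have "v * (v powr (c - 1) / (1 - c)) = v powr c / (1 - c)"
    using vp by (simp add: powr_mult_base)
  ultimately show ?thesis using vp by (auto simp: gt_def intro: has_integral_eq[rotated])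
qed

lemma mass_int:
  fixes C :: "'a::finite \<Rightarrow> real"
  assumes c: "0 < c" "c < 1" and C0: "\<forall>z. 0 \<le> C z"
  shows "((\<lambda>t. mass C t * t powr (c - 2)) has_integral (\<Sum>z\<in>UNIV. C z powr c) / (1 - c)) {0<..}"
proof -
  have "((\<lambda>t. \<Sum>z\<in>UNIV. gt t (C z) * t powr (c - 2)) has_integral (\<Sum>z\<in>UNIV. C z powr c / (1 - c))) {0<..}"
    using C0 by (intro has_integral_sum cell_int c) auto
  then show ?thesis by (simp add: mass_def sum_distrib_right sum_divide_distrib)
qed

lemma lmass_int:
  fixes c :: real assumes c: "0 < c" "c < 1"
  shows "\<forall>r\<in>set G. 0 < r \<Longrightarrow> ((\<lambda>t. lmass G t * t powr (c - 2)) has_integral F_cost_list c G / (1 - c)) {0<..}"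
proof (induction G)
  case Nil then show ?case by (simp add: lmass_def F_cost_list_def)
next
  case (Cons r rs)
  have rp: "0 < r" using Cons.prems by simp
  have "((\<lambda>t. gt t r * t powr (c - 2) + lmass rs t * t powr (c - 2)) has_integral
     r powr c / (1 - c) + F_cost_list c rs / (1 - c)) {0<..}"
    using Cons rp by (intro has_integral_add cell_int c) auto
  moreover have "\<And>t. gt t r * t powr (c - 2) + lmass rs t * t powr (c - 2) = lmass (r # rs) t * t powr (c - 2)"
    using rp by (simp add: gt_def lmass_def algebra_simps)
  moreover have "r powr c / (1 - c) + F_cost_list c rs / (1 - c) = F_cost_list c (r # rs) / (1 - c)"
    by (simp add: F_cost_list_def add_divide_distrib)
  ultimately show ?case by simp
qed

definition Eerr :: "real \<Rightarrow> real list \<Rightarrow> real list \<Rightarrow> real" where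
  "Eerr c A G = sum_list (map (\<lambda>(a, r). a powr c - a * r powr (c - 1)) (zip A G))"

lemma errs_int:
  fixes c :: real assumes c: "0 < c" "c < 1"
  shows "list_all2 (\<lambda>a r. 0 \<le> a \<and> a \<le> r) A G \<Longrightarrow> \<forall>r\<in>set G. 0 < r \<Longrightarrow>
    ((\<lambda>t. errs A G t * t powr (c - 2)) has_integral Eerr c A G / (1 - c)) {0<..}"
proof (induction rule: list_all2_induct)
  case Nil then show ?case by (simp add: errs_def Eerr_def)
next
  case (Cons a A r G)
  have rp: "0 < r" using Cons.prems by simp
  have a: "0 \<le> a" "a \<le> r" using Cons.hyps by auto
  have "((\<lambda>t. (gt t a * t powr (c - 2) - a * ((if r \<le> t then 1 else 0) * t powr (c - 2)))
      + errs A G t * t powr (c - 2)) has_integral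
     (a powr c / (1 - c) - a * (r powr (c - 1) / (1 - c))) + Eerr c A G / (1 - c)) {0<..}"
    using Cons rp a by (intro has_integral_add has_integral_diff cell_int has_integral_mult_right ind_integral c) auto
  moreover have "\<And>t. (gt t a * t powr (c - 2) - a * ((if r \<le> t then 1 else 0) * t powr (c - 2)))
      + errs A G t * t powr (c - 2) = errs (a # A) (r # G) t * t powr (c - 2)"
    using rp a by (auto simp: gt_def errs_def algebra_simps)
  moreover have "(a powr c / (1 - c) - a * (r powr (c - 1) / (1 - c))) + Eerr c A G / (1 - c)
     = Eerr c (a # A) (r # G) / (1 - c)"
  proof -
    have "Eerr c (a # A) (r # G) = (a powr c - a * r powr (c - 1)) + Eerr c A G" by (simp add: Eerr_def)
    then show ?thesis by (simp add: add_divide_distrib diff_divide_distrib)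
  qed
  ultimately show ?case by simp
qed

lemma Eerr_bound:
  fixes c :: real assumes c: "0 < c" "c < 1"
  shows "list_all2 (\<lambda>a r. 0 \<le> a \<and> a \<le> r) A G \<Longrightarrow> \<forall>r\<in>set G. 0 < r \<Longrightarrow>
    Eerr c A G \<le> c powr (1 / (1 - c)) * (1 / c - 1) * F_cost_list c G"
proof (induction rule: list_all2_induct)
  case Nil then show ?case by (simp add: Eerr_def F_cost_list_def)
next
  case (Cons a A r G)
  have rp: "0 < r" using Cons.prems by simp
  have "a powr c - a * r powr (c - 1) \<le> c powr (1 / (1 - c)) * (1 / c - 1) * r powr c"
    using delta_bound[OF c _ rp] Cons.hyps by auto
  then show ?case using Cons by (simp add: Eerr_def F_cost_list_def algebra_simps)
qed

lemma coupling_mass: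
  fixes p :: "'a::finite \<Rightarrow> real" and q :: "'b::finite \<Rightarrow> real"
  assumes "is_coupling p q C"
  shows "mass p t \<le> mass C t" "mass q t \<le> mass C t"
proof -
  have C0: "\<And>z. 0 \<le> C z" and P: "\<And>x. (\<Sum>y\<in>UNIV. C (x, y)) = p x"
    and Q: "\<And>y. (\<Sum>x\<in>UNIV. C (x, y)) = q y"
    using assms unfolding is_coupling_def by auto
  have MC: "mass C t = (\<Sum>x\<in>UNIV. \<Sum>y\<in>UNIV. gt t (C (x, y)))"
    unfolding mass_def by (simp add: sum.cartesian_product UNIV_Times_UNIV[symmetric] del: UNIV_Times_UNIV)
  have MC2: "mass C t = (\<Sum>y\<in>UNIV. \<Sum>x\<in>UNIV. gt t (C (x, y)))"
    using MC by (simp add: sum.swap[of _ "UNIV::'a set"])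
  have rowle: "gt t (\<Sum>y\<in>UNIV. f y) \<le> (\<Sum>y\<in>UNIV. gt t (f y))" if f0: "\<And>y. 0 \<le> f y"
    for f :: "'c::finite \<Rightarrow> real"
  proof (cases "0 < (\<Sum>y\<in>UNIV. f y) \<and> (\<Sum>y\<in>UNIV. f y) \<le> t")
    case True
    have "\<And>y. f y \<le> (\<Sum>y\<in>UNIV. f y)" using f0 by (intro member_le_sum) auto
    then have "\<And>y. gt t (f y) = f y" using True f0 unfolding gt_def
      by (metis order_trans order_less_le)
    then show ?thesis using True by (simp add: gt_def)
  next
    case False
    have "gt t (\<Sum>y\<in>UNIV. f y) = 0" using False unfolding gt_def by auto
    moreover have "0 \<le> (\<Sum>y\<in>UNIV. gt t (f y))" by (intro sum_nonneg) (simp add: gt_nonneg)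
    ultimately show ?thesis by simp
  qed
  have "mass p t = (\<Sum>x\<in>UNIV. gt t (\<Sum>y\<in>UNIV. C (x, y)))" unfolding mass_def P by simp
  also have "\<dots> \<le> (\<Sum>x\<in>UNIV. \<Sum>y\<in>UNIV. gt t (C (x, y)))" using C0 by (intro sum_mono rowle) auto
  finally show "mass p t \<le> mass C t" using MC by simp
  have "mass q t = (\<Sum>y\<in>UNIV. gt t (\<Sum>x\<in>UNIV. C (x, y)))" unfolding mass_def Q by simp
  also have "\<dots> \<le> (\<Sum>y\<in>UNIV. \<Sum>x\<in>UNIV. gt t (C (x, y)))" using C0 by (intro sum_mono rowle) auto
  finally show "mass q t \<le> mass C t" using MC2 by simp
qed

theorem corollary3:
  fixes c :: real and p :: "'a::finite \<Rightarrow> real" and q :: "'b::finite \<Rightarrow> real"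
    and G :: "real list" and C :: "'a \<times> 'b \<Rightarrow> real"
  assumes "0 < c" "c < 1"
    and "is_distr p" "is_distr q"
    and "greedy_run p q G"
    and "is_coupling p q C"
  shows "F_cost_list c G \<le> F_cost c C / (1 - c powr (1 / (1 - c)) * (1 / c - 1))"
proof -
  have c: "0 < c" "c < 1" using assms by auto
  have p0: "\<forall>x. 0 \<le> p x" and q0: "\<forall>y. 0 \<le> q y" and S: "(\<Sum>x\<in>UNIV. p x) = (\<Sum>y\<in>UNIV. q y)"
    using assms(3,4) unfolding is_distr_def by auto
  have C0: "\<forall>z. 0 \<le> C z" using assms(6) unfolding is_coupling_def by auto
  from main_ind[OF assms(5) p0 q0 S] obtain A where
    pos: "\<forall>r\<in>set G. 0 < r" and A: "list_all2 (\<lambda>a r. 0 \<le> a \<and> a \<le> r) A G"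
    and L: "\<forall>t. lmass G t \<le> max (mass p t) (mass q t) + errs A G t" by blast
  have ptw: "0 \<le> mass C t * t powr (c - 2) + errs A G t * t powr (c - 2) - lmass G t * t powr (c - 2)" for t
  proof -
    have "lmass G t \<le> mass C t + errs A G t"
      using L[rule_format, of t] coupling_mass[OF assms(6), of t] by linarith
    then have "0 \<le> (mass C t + errs A G t - lmass G t) * t powr (c - 2)" by simp
    then show ?thesis by (simp add: algebra_simps)
  qed
  have I: "((\<lambda>t. mass C t * t powr (c - 2) + errs A G t * t powr (c - 2) - lmass G t * t powr (c - 2))
    has_integral (\<Sum>z\<in>UNIV. C z powr c) / (1 - c) + Eerr c A G / (1 - c) - F_cost_list c G / (1 - c)) {0<..}"
    by (intro has_integral_diff has_integral_add mass_int errs_int lmass_int c C0 A pos)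
  have "0 \<le> (\<Sum>z\<in>UNIV. C z powr c) / (1 - c) + Eerr c A G / (1 - c) - F_cost_list c G / (1 - c)"
    using has_integral_nonneg[OF I] ptw by blast
  then have "0 \<le> ((\<Sum>z\<in>UNIV. C z powr c) + Eerr c A G - F_cost_list c G) / (1 - c)"
    by (simp add: diff_divide_distrib add_divide_distrib)
  then have main: "F_cost_list c G \<le> F_cost c C + Eerr c A G"
    using c by (simp add: F_cost_def zero_le_divide_iff)
  define d where "d = c powr (1 / (1 - c)) * (1 / c - 1)"
  have Eb: "Eerr c A G \<le> d * F_cost_list c G" unfolding d_def by (rule Eerr_bound[OF c A pos])
  have d1: "d < 1"
  proof -
    have "c powr (1 / (1 - c)) \<le> c" using c by (intro powr_le_one_le) (auto simp: field_simps)
    moreover have "0 \<le> 1 / c - 1" using c by (simp add: field_simps)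
    ultimately have "d \<le> c * (1 / c - 1)" unfolding d_def by (intro mult_right_mono) auto
    also have "\<dots> = 1 - c" using c by (simp add: field_simps)
    finally show ?thesis using c by simp
  qed
  have "(1 - d) * F_cost_list c G \<le> F_cost c C" using main Eb by (simp add: algebra_simps)
  then show ?thesis using d1 unfolding d_def[symmetric] by (simp add: pos_le_divide_eq mult.commute)
qed

end
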